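(* Let $P$ be an APP with stochastic game structure $\mathcal{G}_P$ and let $I$ be a linear invariant for $\mathcal{G}_P$. If there exists an LRSM $\eta$ with respect to $I$ (with constants $\epsilon\ge1$, $K,K'\le-1$), then (1) $P$ is almost-surely terminating, i.e. there is an angelic scheduler $\sigma$ (namely any $\eta$-greedy one) such that $\mathbb{P}^{\sigma,\pi}(T<\infty)=1$ for every demonic scheduler $\pi$; and (2) $\mathsf{ET}(P)\le\frac{\eta(\ell_0,\mathbf{x}_0)-K'}{\epsilon}$, in particular $\mathsf{ET}(P)<\infty$ (indeed $\sup_\pi\mathbb{E}^{\sigma,\pi}[T]\le\frac{\eta(\ell_0,\mathbf{x}_0)-K'}{\epsilon}$ for every $\eta$-greedy $\sigma$).
   Context: Affine probabilistic programs (APPs) and their semantics. An APP $P$ has finitely many real-valued program variables $X=\{x_1,\dots,x_{|X|}\}$ with a given initial valuation $\mathbf{x}_0\in\mathbb{R}^{|X|}$, and finitely many real-valued random variables $R$ with a fixed joint distribution $\mathcal{D}$ whose every component is integrable; a fresh sample $\mathbf{r}\sim\mathcal{D}$ is drawn at each step, independently of the past. $P$ is built from assignments $x:=e$ ($e$ an affine expression over program and random variables), skip, sequencing, while loops guarded by propositionally linear predicates (finite disjunctions of linear assertions; a linear assertion is a finite conjunction of linear constraints, each a non-strict inequality between affine expressions or its negation), and if-then-else statements whose guard is either a propositionally linear predicate or one of the keywords angel (angelic nondeterministic choice), demon (demonic nondeterministic choice), prob($p$) (then-branch taken with probability $p\in[0,1]$). $P$ is interpreted as a stochastic game structure $\mathcal{G}_P$: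 a finite set $L$ of locations partitioned into angelic, demonic, probabilistic and deterministic locations; an initial location $\ell_0$; a deterministic terminal location $\ell_{out}$ with an identity self-loop; and transitions $(\ell,f,\ell')$ with affine update functions $f:\mathbb{R}^{|X|}\times\mathbb{R}^{|R|}\to\mathbb{R}^{|X|}$. An assignment yields a deterministic location with one transition performing the update; all other transitions (control flow, and all transitions out of angelic, demonic and probabilistic locations) have the identity update $id$. Each location has at most two outgoing transitions; a probabilistic location $\ell$ carries a probability distribution $Pr_\ell$ over its outgoing transitions; each transition $\tau$ out of a deterministic location has a guard $G(\tau)$ (a propositionally linear predicate), and the guards of the transitions out of one location are mutually exclusive and jointly exhaustive. A configuration is a pair $(\ell,\mathbf{x})$. An angelic (resp. demonic) scheduler maps every finite sequence of configurations ending in an angelic (resp. demonic) location $\ell$ to a transition out of $\ell$. For an angelic scheduler $\sigma$ and demonic scheduler $\pi$, a run $c_1c_2\cdots$ is generated from $c_1=(\ell_0,\mathbf{x}_0)$: if $c_n=(\ell,\mathbf{x})$, sample $\mathbf{r}\sim\mathcal{D}$, pick a transition $(\ell,f,\ell')$ out of $\ell$ (by $\sigma$ resp. $\pi$ applied to $c_1\cdots c_n$ if $\ell$ is angelic resp. demonic; randomly according to $Pr_\ell$ if probabilistic; the unique one whose guard $\mathbf{x}$ satisfies if deterministic) and set $c_{n+1}=(\ell',f(\mathbf{x},\mathbf{r}))$. This yields a probability measure $\mathbb{P}^{\sigma,\pi}$ on runs with expectation $\mathbb{E}^{\sigma,\pi}$. Let $\theta_n$ and $\overline{\mathbf{x}}_n$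 be the location and valuation of $c_n$, let $\mathcal{F}_n$ be the $\sigma$-algebra generated by $\theta_j,\overline{\mathbf{x}}_j$ for $j\le n$, and let $T=\min\{n:\theta_n=\ell_{out}\}$ ($\min\emptyset=\infty$) be the termination time. $\mathsf{ET}(P)=\inf_\sigma\sup_\pi\mathbb{E}^{\sigma,\pi}[T]$. A configuration is reachable if it occurs on some finite path from $(\ell_0,\mathbf{x}_0)$ (consecutive configurations related by a transition enabled in the first one and some value $\mathbf{r}$ in the range of the random variables). Linear invariants and LRSMs. A linear invariant $I$ assigns to each location $\ell$ a finite set $I(\ell)$ of linear assertions over $X$ such that every reachable configuration $(\ell,\mathbf{x})$ satisfies $\mathbf{x}\in\bigcup I(\ell)$. For $\eta:L\times\mathbb{R}^{|X|}\to\mathbb{R}$, the pre-expectation $\mathrm{pre}_\eta(\ell,\mathbf{x})$ equals $\sum_{(\ell,id,\ell')}Pr_\ell(\ell,id,\ell')\,\eta(\ell',\mathbf{x})$ if $\ell$ is probabilistic; $\max_{(\ell,id,\ell')}\eta(\ell',\mathbf{x})$ if $\ell$ is demonic; $\min_{(\ell,id,\ell')}\eta(\ell',\mathbf{x})$ if $\ell$ is angelic; and $\eta(\ell',\mathbb{E}_{\mathbf{r}\sim\mathcal{D}}f(\mathbf{x},\mathbf{r}))$ if $\ell$ is deterministic and $(\ell,f,\ell')$ is the transition whose guard $\mathbf{x}$ satisfies. A linear ranking-supermartingale map (LRSM) with respect to $I$ is a function $\eta:L\times\mathbb{R}^{|X|}\to\mathbb{R}$ for which there exist $\epsilon\ge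 1$ and $K,K'\le -1$ such that for all $\ell\in L$, $\mathbf{x}\in\mathbb{R}^{|X|}$: (C1) $\eta(\ell,\cdot)$ is affine; (C2) if $\ell\ne\ell_{out}$ and $\mathbf{x}\in\bigcup I(\ell)$ then $\eta(\ell,\mathbf{x})\ge0$; (C3) if $\ell=\ell_{out}$ and $\mathbf{x}\in\bigcup I(\ell)$ then $K'\le\eta(\ell,\mathbf{x})\le K$; (C4) if $\ell\ne\ell_{out}$ and $\mathbf{x}\in\bigcup I(\ell)$ then $\mathrm{pre}_\eta(\ell,\mathbf{x})\le\eta(\ell,\mathbf{x})-\epsilon$. An angelic scheduler is $\eta$-greedy if, on every finite path ending in a configuration $(\ell,\mathbf{x})$ with $\ell$ angelic, it chooses a transition $(\ell,id,\ell')$ with $\eta(\ell',\mathbf{x})=\min_{(\ell,id,\ell'')}\eta(\ell'',\mathbf{x})$. *)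

theory Defs
  imports "HOL-Probability.Probability"
begin

datatype lkind = Angel | Demon | Probab | Determ

text \<open>Every location has (at most) two outgoing
  transitions, indexed by a Boolean branch; a location with a single outgoing
  transition is represented with two identical branches (for deterministic
  locations: one branch with guard true everywhere and one with guard false).
  prb l is the probability of the True-branch at a probabilistic location.
  dist is the joint distribution D of the random variables.\<close>
record ('l, 'n::finite, 'r::finite) sgs =
  kind :: "'l \<Rightarrow> lkind"
  init_loc :: 'l
  out_loc :: 'l
  init_val :: "real ^ 'n"
  succ :: "'l \<Rightarrow> bool \<Rightarrow> 'l"
  upd :: "'l \<Rightarrow> bool \<Rightarrow> real ^ 'n \<Rightarrow> real ^ 'r \<Rightarrow> real ^ 'n"
  guard :: "'l \<Rightarrow> bool \<Rightarrow> real ^ 'n \<Rightarrow> bool"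
  prb :: "'l \<Rightarrow> real"
  dist :: "(real ^ 'r) measure"

text \<open>Linear constraint a.x <= c (s = True) or its negation (s = False);
  a linear assertion is a finite conjunction of these; a propositionally linear
  predicate is a finite disjunction of linear assertions.\<close>
definition lin_assertion :: "(real ^ 'n::finite \<Rightarrow> bool) \<Rightarrow> bool" where
  "lin_assertion \<phi> \<longleftrightarrow>
     (\<exists>cs :: ((real ^ 'n) \<times> real \<times> bool) list.
        \<phi> = (\<lambda>x. \<forall>(a, c, s) \<in> set cs. (a \<bullet> x \<le> c) = s))"

definition prop_linear :: "(real ^ 'n::finite \<Rightarrow> bool) \<Rightarrow> bool" where
  "prop_linear \<phi> \<longleftrightarrow>
     (\<exists>As. (\<forall>A \<in> set As. lin_assertion A) \<and> \<phi> = (\<lambda>x. \<exists>A \<in> set As. A x))"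

definition affine_upd :: "(real ^ 'n::finite \<Rightarrow> real ^ 'r::finite \<Rightarrow> real ^ 'n) \<Rightarrow> bool" where
  "affine_upd f \<longleftrightarrow>
     (\<exists>(A :: real ^ 'n ^ 'n) (B :: real ^ 'r ^ 'n) c. \<forall>x r. f x r = A *v x + B *v r + c)"

definition well_formed :: "('l, 'n::finite, 'r::finite) sgs \<Rightarrow> bool" where
  "well_formed G \<longleftrightarrow>
     prob_space (dist G) \<and> sets (dist G) = sets borel \<and>
     (\<forall>i. integrable (dist G) (\<lambda>r. r $ i)) \<and>
     kind G (out_loc G) = Determ \<and>
     (\<forall>b. succ G (out_loc G) b = out_loc G \<and> upd G (out_loc G) b = (\<lambda>x r. x)) \<and>
     (\<forall>l b. affine_upd (upd G l b)) \<and>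
     (\<forall>l b. kind G l \<noteq> Determ \<longrightarrow> upd G l b = (\<lambda>x r. x)) \<and>
     (\<forall>l. kind G l = Determ \<longrightarrow>
          (\<forall>b. prop_linear (guard G l b)) \<and> (\<forall>x. guard G l True x \<longleftrightarrow> \<not> guard G l False x)) \<and>
     (\<forall>l. kind G l = Probab \<longrightarrow> 0 \<le> prb G l \<and> prb G l \<le> 1)"

text \<open>The range of the random variables: the support of D.\<close>
definition dist_support :: "('l, 'n::finite, 'r::finite) sgs \<Rightarrow> (real ^ 'r) set" where
  "dist_support G = {r. \<forall>U. open U \<longrightarrow> r \<in> U \<longrightarrow> emeasure (dist G) U > 0}"

definition enabled :: "('l, 'n::finite, 'r::finite) sgs \<Rightarrow> 'l \<Rightarrow> real ^ 'n \<Rightarrow> bool \<Rightarrow> bool" where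
  "enabled G l x b \<longleftrightarrow> (kind G l = Determ \<longrightarrow> guard G l b x)"

definition step_rel :: "('l, 'n::finite, 'r::finite) sgs \<Rightarrow> 'l \<times> (real ^ 'n) \<Rightarrow> 'l \<times> (real ^ 'n) \<Rightarrow> bool" where
  "step_rel G c c' \<longleftrightarrow>
     (\<exists>b r. enabled G (fst c) (snd c) b \<and> r \<in> dist_support G \<and>
            c' = (succ G (fst c) b, upd G (fst c) b (snd c) r))"

definition reachable :: "('l, 'n::finite, 'r::finite) sgs \<Rightarrow> 'l \<times> (real ^ 'n) \<Rightarrow> bool" where
  "reachable G c \<longleftrightarrow> (step_rel G)\<^sup>*\<^sup>* (init_loc G, init_val G) c"

definition fpath :: "('l, 'n::finite, 'r::finite) sgs \<Rightarrow> ('l \<times> (real ^ 'n)) list \<Rightarrow> bool" where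
  "fpath G h \<longleftrightarrow> h \<noteq> [] \<and> hd h = (init_loc G, init_val G) \<and>
     (\<forall>i. Suc i < length h \<longrightarrow> step_rel G (h ! i) (h ! Suc i))"

definition inv_holds :: "('l \<Rightarrow> (real ^ 'n::finite \<Rightarrow> bool) set) \<Rightarrow> 'l \<Rightarrow> real ^ 'n \<Rightarrow> bool" where
  "inv_holds I l x \<longleftrightarrow> (\<exists>\<phi> \<in> I l. \<phi> x)"

definition lin_invariant ::
  "('l, 'n::finite, 'r::finite) sgs \<Rightarrow> ('l \<Rightarrow> (real ^ 'n \<Rightarrow> bool) set) \<Rightarrow> bool" where
  "lin_invariant G I \<longleftrightarrow>
     (\<forall>l. finite (I l) \<and> (\<forall>\<phi> \<in> I l. lin_assertion \<phi>)) \<and>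
     (\<forall>l x. reachable G (l, x) \<longrightarrow> inv_holds I l x)"

definition pre_exp ::
  "('l, 'n::finite, 'r::finite) sgs \<Rightarrow> ('l \<Rightarrow> real ^ 'n \<Rightarrow> real) \<Rightarrow> 'l \<Rightarrow> real ^ 'n \<Rightarrow> real" where
  "pre_exp G \<eta> l x =
     (case kind G l of
        Probab \<Rightarrow> prb G l * \<eta> (succ G l True) x + (1 - prb G l) * \<eta> (succ G l False) x
      | Demon \<Rightarrow> max (\<eta> (succ G l True) x) (\<eta> (succ G l False) x)
      | Angel \<Rightarrow> min (\<eta> (succ G l True) x) (\<eta> (succ G l False) x)
      | Determ \<Rightarrow> \<eta> (succ G l (guard G l True x))
                    (integral\<^sup>L (dist G) (\<lambda>r. upd G l (guard G l True x) x r)))"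

definition is_LRSM ::
  "('l, 'n::finite, 'r::finite) sgs \<Rightarrow> ('l \<Rightarrow> (real ^ 'n \<Rightarrow> bool) set) \<Rightarrow>
   ('l \<Rightarrow> real ^ 'n \<Rightarrow> real) \<Rightarrow> real \<Rightarrow> real \<Rightarrow> real \<Rightarrow> bool" where
  "is_LRSM G I \<eta> \<epsilon> K K' \<longleftrightarrow>
     \<epsilon> \<ge> 1 \<and> K \<le> -1 \<and> K' \<le> -1 \<and>
     (\<forall>l. \<exists>a c. \<forall>x. \<eta> l x = a \<bullet> x + c) \<and>
     (\<forall>l x. l \<noteq> out_loc G \<longrightarrow> inv_holds I l x \<longrightarrow> \<eta> l x \<ge> 0) \<and>
     (\<forall>x. inv_holds I (out_loc G) x \<longrightarrow> K' \<le> \<eta> (out_loc G) x \<and> \<eta> (out_loc G) x \<le> K) \<and>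
     (\<forall>l x. l \<noteq> out_loc G \<longrightarrow> inv_holds I l x \<longrightarrow> pre_exp G \<eta> l x \<le> \<eta> l x - \<epsilon>)"

text \<open>A scheduler maps a finite history of configurations to a branch;
  only its values on histories ending in an angelic (resp. demonic) location
  matter. Schedulers are required to be measurable.\<close>
type_synonym ('l, 'n) sched = "('l \<times> (real ^ 'n)) list \<Rightarrow> bool"

definition sched_measurable :: "('l, 'n::finite) sched \<Rightarrow> bool" where
  "sched_measurable \<sigma> \<longleftrightarrow>
     (\<forall>n. (\<lambda>h. \<sigma> (map h [0..<Suc n])) \<in>
        measurable (PiM UNIV (\<lambda>_::nat. count_space UNIV \<Otimes>\<^sub>M (borel :: (real ^ 'n) measure)))
                   (count_space UNIV))"

definition greedy ::
  "('l, 'n::finite, 'r::finite) sgs \<Rightarrow> ('l \<Rightarrow> real ^ 'n \<Rightarrow> real) \<Rightarrow> ('l, 'n) sched \<Rightarrow> bool" where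
  "greedy G \<eta> \<sigma> \<longleftrightarrow>
     (\<forall>h l x. fpath G h \<longrightarrow> last h = (l, x) \<longrightarrow> kind G l = Angel \<longrightarrow>
        \<eta> (succ G l (\<sigma> h)) x = min (\<eta> (succ G l True) x) (\<eta> (succ G l False) x))"

text \<open>Noise: at each step an independent sample r from D and an independent
  uniform u in [0,1] used to resolve probabilistic branching.\<close>
definition noise :: "('l, 'n::finite, 'r::finite) sgs \<Rightarrow> (nat \<Rightarrow> (real ^ 'r) \<times> real) measure" where
  "noise G = PiM UNIV (\<lambda>_::nat. dist G \<Otimes>\<^sub>M uniform_measure lborel {0..1::real})"

definition next_cfg ::
  "('l, 'n::finite, 'r::finite) sgs \<Rightarrow> ('l, 'n) sched \<Rightarrow> ('l, 'n) sched \<Rightarrow>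
   ('l \<times> (real ^ 'n)) list \<Rightarrow> (real ^ 'r) \<times> real \<Rightarrow> 'l \<times> (real ^ 'n)" where
  "next_cfg G \<sigma> \<pi> h ru =
     (let l = fst (last h); x = snd (last h); r = fst ru; u = snd ru;
          b = (case kind G l of
                 Angel \<Rightarrow> \<sigma> h
               | Demon \<Rightarrow> \<pi> h
               | Probab \<Rightarrow> u < prb G l
               | Determ \<Rightarrow> guard G l True x)
      in (succ G l b, upd G l b x r))"

primrec hist ::
  "('l, 'n::finite, 'r::finite) sgs \<Rightarrow> ('l, 'n) sched \<Rightarrow> ('l, 'n) sched \<Rightarrow>
   (nat \<Rightarrow> (real ^ 'r) \<times> real) \<Rightarrow> nat \<Rightarrow> ('l \<times> (real ^ 'n)) list" where
  "hist G \<sigma> \<pi> \<omega> 0 = [(init_loc G, init_val G)]"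
| "hist G \<sigma> \<pi> \<omega> (Suc n) = hist G \<sigma> \<pi> \<omega> n @ [next_cfg G \<sigma> \<pi> (hist G \<sigma> \<pi> \<omega> n) (\<omega> n)]"

definition cfg ::
  "('l, 'n::finite, 'r::finite) sgs \<Rightarrow> ('l, 'n) sched \<Rightarrow> ('l, 'n) sched \<Rightarrow>
   (nat \<Rightarrow> (real ^ 'r) \<times> real) \<Rightarrow> nat \<Rightarrow> 'l \<times> (real ^ 'n)" where
  "cfg G \<sigma> \<pi> \<omega> n = last (hist G \<sigma> \<pi> \<omega> n)"

definition term_time ::
  "('l, 'n::finite, 'r::finite) sgs \<Rightarrow> ('l, 'n) sched \<Rightarrow> ('l, 'n) sched \<Rightarrow>
   (nat \<Rightarrow> (real ^ 'r) \<times> real) \<Rightarrow> ennreal" where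
  "term_time G \<sigma> \<pi> \<omega> =
     (if \<exists>n. fst (cfg G \<sigma> \<pi> \<omega> n) = out_loc G
      then of_nat (LEAST n. fst (cfg G \<sigma> \<pi> \<omega> n) = out_loc G) else \<infinity>)"

definition prob_term :: "('l, 'n::finite, 'r::finite) sgs \<Rightarrow> ('l, 'n) sched \<Rightarrow> ('l, 'n) sched \<Rightarrow> ennreal" where
  "prob_term G \<sigma> \<pi> =
     emeasure (noise G) {\<omega> \<in> space (noise G). \<exists>n. fst (cfg G \<sigma> \<pi> \<omega> n) = out_loc G}"

definition exp_T :: "('l, 'n::finite, 'r::finite) sgs \<Rightarrow> ('l, 'n) sched \<Rightarrow> ('l, 'n) sched \<Rightarrow> ennreal" where
  "exp_T G \<sigma> \<pi> = (\<integral>\<^sup>+ \<omega>. term_time G \<sigma> \<pi> \<omega> \<partial>noise G)"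

definition ET :: "('l, 'n::finite, 'r::finite) sgs \<Rightarrow> ennreal" where
  "ET G = (\<Sqinter>\<sigma> \<in> {\<sigma>. sched_measurable \<sigma>}. \<Squnion>\<pi> \<in> {\<pi>. sched_measurable \<pi>}. exp_T G \<sigma> \<pi>)"

end

theory Submission
  imports Defs
begin

lemma lin_assertion_meas:
  fixes \<phi> :: "real ^ 'n::finite \<Rightarrow> bool"
  assumes "lin_assertion \<phi>" shows "Measurable.pred borel \<phi>"
proof -
  obtain cs :: "((real ^ 'n) \<times> real \<times> bool) list" where cs: "\<phi> = (\<lambda>x. \<forall>(a, c, s) \<in> set cs. (a \<bullet> x \<le> c) = s)"
    using assms unfolding lin_assertion_def by blast
  have "\<And>a c s. Measurable.pred borel (\<lambda>x::real^'n. (a \<bullet> x \<le> c) = s)" by measurable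
  then have "Measurable.pred borel (\<lambda>x::real^'n. \<forall>p \<in> set cs. (fst p \<bullet> x \<le> fst (snd p)) = snd (snd p))"
    by (intro pred_intros_finite) auto
  then show ?thesis unfolding cs by (simp add: case_prod_beta)
qed

lemma prop_linear_meas:
  fixes \<phi> :: "real ^ 'n::finite \<Rightarrow> bool"
  assumes "prop_linear \<phi>" shows "Measurable.pred borel \<phi>"
proof -
  obtain As where As: "\<forall>A \<in> set As. lin_assertion A" "\<phi> = (\<lambda>x. \<exists>A \<in> set As. A x)"
    using assms unfolding prop_linear_def by blast
  have "Measurable.pred borel (\<lambda>x. \<exists>A \<in> set As. A x)"
    using As(1) lin_assertion_meas by (intro pred_intros_finite) auto
  then show ?thesis using As(2) by simp
qed

lemma affine_upd_form:
  assumes "affine_upd f"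
  obtains A B c where "\<And>x r. f x r = A *v x + B *v r + c"
  using assms unfolding affine_upd_def by blast

lemma affine_upd_cont:
  assumes "affine_upd (f :: real ^ 'n::finite \<Rightarrow> real ^ 'r::finite \<Rightarrow> real ^ 'n)"
  shows "continuous_on UNIV (\<lambda>p. f (fst p) (snd p))"
proof -
  obtain A B c where e: "\<And>x r. f x r = A *v x + B *v r + c" using affine_upd_form[OF assms] by blast
  have "continuous_on UNIV (\<lambda>p::(real^'n)\<times>(real^'r). A *v fst p + B *v snd p + c)"
    by (intro continuous_intros linear_continuous_on continuous_on_compose2[OF linear_continuous_on[OF matrix_vector_mul_bounded_linear]]) auto
  then show ?thesis by (simp add: e)
qed

lemma vec_expand: "(\<Sum>i\<in>UNIV. (x $ i) *\<^sub>R axis i (1::real)) = (x :: real ^ 'n::finite)"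
  by (metis (full_types) basis_expansion scalar_mult_eq_scaleR)

lemma integrable_vec:
  fixes M :: "(real^'r::finite) measure"
  assumes "\<And>i. integrable M (\<lambda>r. r $ i)"
  shows "integrable M (\<lambda>r. r)"
proof -
  have "integrable M (\<lambda>r. \<Sum>i\<in>UNIV. (r $ i) *\<^sub>R axis i (1::real))"
    by (intro Bochner_Integration.integrable_sum integrable_scaleR_left assms)
  then show ?thesis by (simp only: vec_expand)
qed

locale setting =
  fixes G :: "('l::finite, 'n::finite, 'r::finite) sgs"
    and I :: "'l \<Rightarrow> (real ^ 'n \<Rightarrow> bool) set"
    and \<eta> :: "'l \<Rightarrow> real ^ 'n \<Rightarrow> real"
    and \<epsilon> K K' :: real
  assumes wf: "well_formed G"
    and inv: "lin_invariant G I"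
    and lrsm: "is_LRSM G I \<eta> \<epsilon> K K'"
begin

abbreviation "U \<equiv> uniform_measure lborel {0..1::real}"
abbreviation "M0 \<equiv> dist G \<Otimes>\<^sub>M U"

lemma probD: "prob_space (dist G)" using wf unfolding well_formed_def by blast
lemma setsD: "sets (dist G) = sets borel" using wf unfolding well_formed_def by blast
lemma probU: "prob_space U" by (rule prob_space_uniform_measure) auto
lemma probM0: "prob_space M0" by (rule prob_space_pair[OF probD probU])

sublocale S: sequence_space M0
  using probM0 by (simp add: sequence_space_def product_prob_space_def product_prob_space_axioms_def
      product_sigma_finite_def prob_space_imp_sigma_finite)

lemma noise_eq: "noise G = S.S" by (simp add: noise_def)

abbreviation "C \<equiv> (count_space UNIV :: 'l measure) \<Otimes>\<^sub>M (borel :: (real ^ 'n) measure)"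

lemma kind_out: "kind G (out_loc G) = Determ" using wf unfolding well_formed_def by blast
lemma succ_out: "succ G (out_loc G) b = out_loc G" using wf unfolding well_formed_def by blast
lemma upd_out: "upd G (out_loc G) b = (\<lambda>x r. x)" using wf unfolding well_formed_def by blast
lemma upd_aff: "affine_upd (upd G l b)" using wf unfolding well_formed_def by blast
lemma upd_nd: "kind G l \<noteq> Determ \<Longrightarrow> upd G l b = (\<lambda>x r. x)" using wf unfolding well_formed_def by blast
lemma guard_pl: "kind G l = Determ \<Longrightarrow> prop_linear (guard G l b)" using wf unfolding well_formed_def by blast
lemma guard_ex: "kind G l = Determ \<Longrightarrow> guard G l True x \<longleftrightarrow> \<not> guard G l False x" using wf unfolding well_formed_def by blast
lemma prb_bd: "kind G l = Probab \<Longrightarrow> 0 \<le> prb G l \<and> prb G l \<le> 1" using wf unfolding well_formed_def by blast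

lemma upd_meas[measurable]:
  assumes "f \<in> borel_measurable M" "g \<in> borel_measurable M"
  shows "(\<lambda>w. upd G l b (f w) (g w)) \<in> borel_measurable M"
proof -
  have "(\<lambda>w. (f w, g w)) \<in> borel_measurable M"
    using assms by (intro borel_measurable_Pair)
  from borel_measurable_continuous_on[OF affine_upd_cont[OF upd_aff] this] show ?thesis by simp
qed

lemma probS: "prob_space S.S" by (rule prob_space_PiM[OF probM0])
lemma sfS: "sigma_finite_measure S.S" by (rule prob_space_imp_sigma_finite[OF probS])

lemma decomp:
  fixes g :: "(nat \<Rightarrow> (real^'r) \<times> real) \<times> ((real^'r) \<times> real) \<Rightarrow> ennreal"
  assumes g: "g \<in> borel_measurable (S.S \<Otimes>\<^sub>M M0)"
   and dep: "\<And>\<omega> \<omega>' s. (\<And>j. j < n \<Longrightarrow> \<omega> j = \<omega>' j) \<Longrightarrow> g (\<omega>, s) = g (\<omega>', s)"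
  shows "(\<integral>\<^sup>+\<omega>. g (\<omega>, \<omega> n) \<partial>S.S) = (\<integral>\<^sup>+\<omega>. \<integral>\<^sup>+s. g (\<omega>, s) \<partial>M0 \<partial>S.S)"
proof -
  have gm: "(\<lambda>\<omega>. g (\<omega>, \<omega> n)) \<in> borel_measurable S.S"
    by (rule measurable_compose[OF _ g]) (intro measurable_Pair measurable_ident_sets refl measurable_component_singleton; simp)
  have cm: "(\<lambda>(\<omega>, \<omega>'). comb_seq n \<omega> \<omega>') \<in> S.S \<Otimes>\<^sub>M S.S \<rightarrow>\<^sub>M S.S"
    by (rule measurable_comb_seq)
  have "(\<integral>\<^sup>+\<omega>. g (\<omega>, \<omega> n) \<partial>S.S)
      = (\<integral>\<^sup>+\<omega>. g (\<omega>, \<omega> n) \<partial>distr (S.S \<Otimes>\<^sub>M S.S) S.S (\<lambda>(\<omega>, \<omega>'). comb_seq n \<omega> \<omega>'))"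
    by (simp only: S.PiM_comb_seq)
  also have "\<dots> = (\<integral>\<^sup>+p. g (case p of (\<omega>, \<omega>') \<Rightarrow> comb_seq n \<omega> \<omega>', (case p of (\<omega>, \<omega>') \<Rightarrow> comb_seq n \<omega> \<omega>') n) \<partial>(S.S \<Otimes>\<^sub>M S.S))"
    by (rule nn_integral_distr[OF cm]) (simp add: gm)
  also have "\<dots> = (\<integral>\<^sup>+p. g (fst p, snd p 0) \<partial>(S.S \<Otimes>\<^sub>M S.S))"
  proof (rule nn_integral_cong)
    fix p :: "(nat \<Rightarrow> (real^'r) \<times> real) \<times> (nat \<Rightarrow> (real^'r) \<times> real)"
    obtain a b where p: "p = (a, b)" by (cases p)
    have "comb_seq n a b n = b 0" using comb_seq_add[of n a b 0] by simp
    moreover have "g (comb_seq n a b, s) = g (a, s)" for s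
      by (rule dep) (simp add: comb_seq_less)
    ultimately show "g (case p of (\<omega>, \<omega>') \<Rightarrow> comb_seq n \<omega> \<omega>', (case p of (\<omega>, \<omega>') \<Rightarrow> comb_seq n \<omega> \<omega>') n) = g (fst p, snd p 0)"
      by (simp add: p)
  qed
  also have "\<dots> = (\<integral>\<^sup>+\<omega>. \<integral>\<^sup>+\<omega>'. g (\<omega>, \<omega>' 0) \<partial>S.S \<partial>S.S)"
  proof -
    have "(\<lambda>p. g (fst p, snd p 0)) \<in> borel_measurable (S.S \<Otimes>\<^sub>M S.S)"
      by (rule measurable_compose[OF _ g])
         (intro measurable_Pair measurable_fst measurable_compose[OF measurable_snd measurable_component_singleton]; simp)
    from sigma_finite_measure.nn_integral_fst[OF sfS this] show ?thesis by simp
  qed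
  also have "\<dots> = (\<integral>\<^sup>+\<omega>. \<integral>\<^sup>+s. g (\<omega>, s) \<partial>M0 \<partial>S.S)"
  proof (rule nn_integral_cong)
    fix \<omega> assume "\<omega> \<in> space S.S"
    have gs: "(\<lambda>s. g (\<omega>, s)) \<in> borel_measurable M0"
      using g \<open>\<omega> \<in> space S.S\<close> by measurable
    have "(\<integral>\<^sup>+s. g (\<omega>, s) \<partial>M0) = (\<integral>\<^sup>+s. g (\<omega>, s) \<partial>distr S.S M0 (\<lambda>\<omega>'. \<omega>' 0))"
      using S.PiM_component[of 0] by simp
    also have "\<dots> = (\<integral>\<^sup>+\<omega>'. g (\<omega>, \<omega>' 0) \<partial>S.S)"
      by (rule nn_integral_distr) (auto simp: gs)
    finally show "(\<integral>\<^sup>+\<omega>'. g (\<omega>, \<omega>' 0) \<partial>S.S) = (\<integral>\<^sup>+s. g (\<omega>, s) \<partial>M0)" by simp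
  qed
  finally show ?thesis .
qed

lemma AE_support: "AE r in dist G. r \<in> dist_support G"
proof -
  obtain B :: "(real^'r) set set" where B: "countable B" "topological_basis B"
    using ex_countable_basis by blast
  define B0 where "B0 = {b \<in> B. emeasure (dist G) b = 0}"
  have Bopen: "b \<in> B \<Longrightarrow> open b" for b using B(2) by (simp add: topological_basis_def)
  have meas: "b \<in> B \<Longrightarrow> b \<in> sets (dist G)" for b using Bopen setsD by simp
  have N: "(\<Union>b\<in>B0. b) \<in> null_sets (dist G)"
    by (rule null_sets_UN') (use B(1) meas in \<open>auto simp: B0_def null_sets_def intro: countable_subset[of _ B]\<close>)
  show ?thesis
  proof (rule AE_I'[OF N], safe)
    fix r assume "r \<in> space (dist G)" "r \<notin> dist_support G"
    then obtain V where V: "open V" "r \<in> V" "\<not> emeasure (dist G) V > 0"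
      unfolding dist_support_def by blast
    obtain b where b: "b \<in> B" "r \<in> b" "b \<subseteq> V" using topological_basisE[OF B(2) V(1,2)] by blast
    have "emeasure (dist G) b \<le> emeasure (dist G) V"
      by (rule emeasure_mono[OF b(3)]) (use V(1) setsD in simp)
    then have "emeasure (dist G) b = 0" using V(3) by (simp add: not_less)
    then show "r \<in> (\<Union>b\<in>B0. b)" using b by (auto simp: B0_def)
  qed
qed

lemma AE_support_M0: "AE s in M0. fst s \<in> dist_support G"
proof -
  obtain N where N: "N \<in> null_sets (dist G)" "{r \<in> space (dist G). r \<notin> dist_support G} \<subseteq> N"
    using AE_support unfolding eventually_ae_filter by blast
  interpret D: prob_space "dist G" by (rule probD)
  interpret U: prob_space U by (rule probU)
  interpret P: pair_sigma_finite "dist G" U ..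
  have "N \<times> space U \<in> null_sets M0"
    using N(1) by (intro U.times_in_null_sets1) auto
  moreover have "{s \<in> space M0. \<not> fst s \<in> dist_support G} \<subseteq> N \<times> space U"
    using N(2) by (auto simp: space_pair_measure)
  ultimately show ?thesis by (rule AE_I')
qed

lemma support_ne: "\<exists>r. r \<in> dist_support G"
proof (rule ccontr)
  assume "\<not> ?thesis"
  then have "AE r in dist G. False" using AE_support by simp
  then show False using prob_space.AE_const[OF probD] by simp
qed

lemma reach_step: "reachable G c \<Longrightarrow> step_rel G c c' \<Longrightarrow> reachable G c'"
  unfolding reachable_def by (rule rtranclp.rtrancl_into_rtrancl)

lemma reach_inv: "reachable G (l, x) \<Longrightarrow> inv_holds I l x"
  using inv unfolding lin_invariant_def by blast

lemma eps_ge: "\<epsilon> \<ge> 1" and K'_le: "K' \<le> -1" and K_le: "K \<le> -1"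
  using lrsm unfolding is_LRSM_def by auto
lemma eta_aff: "\<exists>a c. \<forall>x. \<eta> l x = a \<bullet> x + c" using lrsm unfolding is_LRSM_def by blast
lemma C2: "l \<noteq> out_loc G \<Longrightarrow> inv_holds I l x \<Longrightarrow> \<eta> l x \<ge> 0" using lrsm unfolding is_LRSM_def by blast
lemma C3: "inv_holds I (out_loc G) x \<Longrightarrow> K' \<le> \<eta> (out_loc G) x" using lrsm unfolding is_LRSM_def by blast
lemma C4: "l \<noteq> out_loc G \<Longrightarrow> inv_holds I l x \<Longrightarrow> pre_exp G \<eta> l x \<le> \<eta> l x - \<epsilon>"
  using lrsm unfolding is_LRSM_def by blast

lemma reach_lower: "reachable G (l, x) \<Longrightarrow> \<eta> l x - K' \<ge> 0"
proof -
  assume "reachable G (l, x)"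
  then have i: "inv_holds I l x" by (rule reach_inv)
  show ?thesis
  proof (cases "l = out_loc G")
    case True then show ?thesis using C3 i by simp
  next
    case False then show ?thesis using C2[OF False i] K'_le by simp
  qed
qed

lemma eta_meas: "(\<lambda>c. \<eta> (fst c) (snd c)) \<in> borel_measurable C"
proof -
  have "(\<lambda>c. (\<lambda>l c. \<eta> l (snd c)) (fst c) c) \<in> borel_measurable C"
  proof (rule measurable_compose_countable'[OF _ measurable_fst])
    fix l
    obtain a c where e: "\<forall>x. \<eta> l x = a \<bullet> x + c" using eta_aff by blast
    show "(\<lambda>p. \<eta> l (snd p)) \<in> borel_measurable C" unfolding e[rule_format] by measurable
  qed simp
  then show ?thesis by simp
qed

end

locale sched_setting = setting G I \<eta> \<epsilon> K K'
  for G :: "('l::finite, 'n::finite, 'r::finite) sgs"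
    and I :: "'l \<Rightarrow> (real ^ 'n \<Rightarrow> bool) set"
    and \<eta> :: "'l \<Rightarrow> real ^ 'n \<Rightarrow> real"
    and \<epsilon> K K' :: real +
  fixes \<sigma> \<pi> :: "('l, 'n) sched"
  assumes sm_\<sigma>: "sched_measurable \<sigma>" and sm_\<pi>: "sched_measurable \<pi>"
begin

abbreviation "hst \<equiv> hist G \<sigma> \<pi>"
abbreviation "cf \<equiv> cfg G \<sigma> \<pi>"

lemma hist_ne: "hst \<omega> n \<noteq> []" by (induction n) auto

lemma cfg_0: "cf \<omega> 0 = (init_loc G, init_val G)" by (simp add: cfg_def)
lemma cfg_Suc: "cf \<omega> (Suc n) = next_cfg G \<sigma> \<pi> (hst \<omega> n) (\<omega> n)" by (simp add: cfg_def)

lemma hist_map: "hst \<omega> n = map (\<lambda>j. cf \<omega> j) [0..<Suc n]"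
proof (induction n)
  case 0 then show ?case by (simp add: cfg_def)
next
  case (Suc n)
  have "hst \<omega> (Suc n) = hst \<omega> n @ [cf \<omega> (Suc n)]" by (simp add: cfg_def)
  also have "\<dots> = map (\<lambda>j. cf \<omega> j) [0..<Suc n] @ [cf \<omega> (Suc n)]" using Suc by (simp del: upt_Suc)
  also have "\<dots> = map (\<lambda>j. cf \<omega> j) [0..<Suc (Suc n)]" by simp
  finally show ?case .
qed

lemma hist_map_min: "hst \<omega> n = map (\<lambda>j. cf \<omega> (min j n)) [0..<Suc n]"
  unfolding hist_map by (intro map_cong) auto

lemma hist_dep: "(\<And>j. j < n \<Longrightarrow> \<omega> j = \<omega>' j) \<Longrightarrow> hst \<omega> n = hst \<omega>' n"
  by (induction n) auto

lemma last_hist: "last (hst \<omega> n) = cf \<omega> n" by (simp add: cfg_def)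

lemma sched_meas_hist:
  assumes sm: "sched_measurable s" and cm: "\<And>j. j \<le> n \<Longrightarrow> (\<lambda>\<omega>. cf \<omega> j) \<in> S.S \<rightarrow>\<^sub>M C"
    and f: "f \<in> N \<rightarrow>\<^sub>M S.S"
  shows "(\<lambda>p. s (hst (f p) n)) \<in> N \<rightarrow>\<^sub>M count_space UNIV"
proof -
  have 1: "(\<lambda>h. s (map h [0..<Suc n])) \<in> PiM UNIV (\<lambda>_::nat. C) \<rightarrow>\<^sub>M count_space UNIV"
    using sm unfolding sched_measurable_def by blast
  have 2: "(\<lambda>p j. cf (f p) (min j n)) \<in> N \<rightarrow>\<^sub>M PiM UNIV (\<lambda>_::nat. C)"
    by (rule measurable_PiM_single') (auto intro!: measurable_compose[OF f cm] simp: space_pair_measure)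
  have "(\<lambda>p. s (map (\<lambda>j. cf (f p) (min j n)) [0..<Suc n])) \<in> N \<rightarrow>\<^sub>M count_space UNIV"
    using measurable_compose[OF 2 1] by simp
  then show ?thesis by (subst hist_map_min) assumption
qed

lemma r_meas: "(\<lambda>p. fst (snd p :: (real^'r) \<times> real)) \<in> borel_measurable (N \<Otimes>\<^sub>M M0)"
proof -
  have "(\<lambda>p. fst (snd p)) \<in> (N \<Otimes>\<^sub>M M0) \<rightarrow>\<^sub>M dist G"
    by (rule measurable_compose[OF measurable_snd measurable_fst])
  then show ?thesis by (rule measurable_cong_sets[OF refl setsD, THEN eqset_imp_iff, THEN iffD1])
qed

lemma u_meas: "(\<lambda>p. snd (snd p :: (real^'r) \<times> real)) \<in> borel_measurable (N \<Otimes>\<^sub>M M0)"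
proof -
  have "(\<lambda>p. snd (snd p)) \<in> (N \<Otimes>\<^sub>M M0) \<rightarrow>\<^sub>M U"
    by (rule measurable_compose[OF measurable_snd measurable_snd])
  moreover have "sets U = sets (borel :: real measure)" by simp
  ultimately show ?thesis by (metis measurable_cong_sets)
qed

lemma phi_meas:
  assumes cm: "\<And>j. j \<le> n \<Longrightarrow> (\<lambda>\<omega>. cf \<omega> j) \<in> S.S \<rightarrow>\<^sub>M C"
  shows "(\<lambda>p. next_cfg G \<sigma> \<pi> (hst (fst p) n) (snd p)) \<in> S.S \<Otimes>\<^sub>M M0 \<rightarrow>\<^sub>M C"
proof -
  define L where "L p = fst (cf (fst p) n)" for p :: "(nat \<Rightarrow> (real^'r) \<times> real) \<times> (real^'r) \<times> real"
  define X where "X p = snd (cf (fst p) n)" for p :: "(nat \<Rightarrow> (real^'r) \<times> real) \<times> (real^'r) \<times> real"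
  define B where "B l p = (case kind G l of Angel \<Rightarrow> \<sigma> (hst (fst p) n) | Demon \<Rightarrow> \<pi> (hst (fst p) n)
     | Probab \<Rightarrow> snd (snd p) < prb G l | Determ \<Rightarrow> guard G l True (X p))" for l p
  define F where "F l p = (succ G l (B l p), upd G l (B l p) (X p) (fst (snd p)))" for l p
  have eq: "next_cfg G \<sigma> \<pi> (hst (fst p) n) (snd p) = F (L p) p" for p
    unfolding F_def B_def L_def X_def by (simp add: next_cfg_def Let_def last_hist)
  have cfn: "(\<lambda>p. cf (fst p) n) \<in> S.S \<Otimes>\<^sub>M M0 \<rightarrow>\<^sub>M C"
    by (rule measurable_compose[OF measurable_fst cm]) simp
  have Lm: "L \<in> S.S \<Otimes>\<^sub>M M0 \<rightarrow>\<^sub>M count_space UNIV"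
    unfolding L_def by (rule measurable_compose[OF cfn measurable_fst])
  have Xm: "X \<in> borel_measurable (S.S \<Otimes>\<^sub>M M0)"
    unfolding X_def by (rule measurable_compose[OF cfn measurable_snd])
  have Bm: "B l \<in> S.S \<Otimes>\<^sub>M M0 \<rightarrow>\<^sub>M count_space UNIV" for l
  proof (cases "kind G l")
    case Angel
    then show ?thesis unfolding B_def using sched_meas_hist[OF sm_\<sigma> cm measurable_fst] by simp
  next
    case Demon
    then show ?thesis unfolding B_def using sched_meas_hist[OF sm_\<pi> cm measurable_fst] by simp
  next
    case Probab
    have "Measurable.pred (S.S \<Otimes>\<^sub>M M0) (\<lambda>p. snd (snd p) < prb G l)"
      using u_meas by measurable
    then show ?thesis unfolding B_def using Probab by simp
  next
    case Determ
    have "Measurable.pred (S.S \<Otimes>\<^sub>M M0) (\<lambda>p. guard G l True (X p))"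
      by (rule measurable_compose[OF Xm prop_linear_meas[OF guard_pl[OF Determ]]])
    then show ?thesis unfolding B_def using Determ by simp
  qed
  have Fm: "F l \<in> S.S \<Otimes>\<^sub>M M0 \<rightarrow>\<^sub>M C" for l
  proof -
    have "(\<lambda>p. (\<lambda>b p. (succ G l b, upd G l b (X p) (fst (snd p)))) (B l p) p) \<in> S.S \<Otimes>\<^sub>M M0 \<rightarrow>\<^sub>M C"
    proof (rule measurable_compose_countable'[OF _ Bm])
      fix b :: bool
      show "(\<lambda>p. (succ G l b, upd G l b (X p) (fst (snd p)))) \<in> S.S \<Otimes>\<^sub>M M0 \<rightarrow>\<^sub>M C"
        by (intro measurable_Pair measurable_const upd_meas[OF Xm r_meas]) auto
    qed simp
    then show ?thesis unfolding F_def by simp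
  qed
  have "(\<lambda>p. F (L p) p) \<in> S.S \<Otimes>\<^sub>M M0 \<rightarrow>\<^sub>M C"
    by (rule measurable_compose_countable'[OF _ Lm]) (auto intro: Fm)
  then show ?thesis by (simp add: eq)
qed

lemma cfg_meas: "(\<lambda>\<omega>. cf \<omega> n) \<in> S.S \<rightarrow>\<^sub>M C"
proof -
  have "\<forall>j\<le>n. (\<lambda>\<omega>. cf \<omega> j) \<in> S.S \<rightarrow>\<^sub>M C"
  proof (induction n)
    case 0
    then show ?case by (simp add: cfg_0)
  next
    case (Suc n)
    have "(\<lambda>\<omega>. next_cfg G \<sigma> \<pi> (hst (fst (\<omega>, \<omega> n)) n) (snd (\<omega>, \<omega> n))) \<in> S.S \<rightarrow>\<^sub>M C"
      by (rule measurable_compose[OF _ phi_meas]) (use Suc in auto)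
    then have "(\<lambda>\<omega>. cf \<omega> (Suc n)) \<in> S.S \<rightarrow>\<^sub>M C" by (simp add: cfg_Suc)
    then show ?case using Suc by (auto simp: le_Suc_eq)
  qed
  then show ?thesis by simp
qed

lemma fpath_reach: "fpath G h \<Longrightarrow> reachable G (last h)"
proof -
  assume fp: "fpath G h"
  have "i < length h \<longrightarrow> reachable G (h ! i)" for i
  proof (induction i)
    case 0
    then show ?case using fp unfolding fpath_def reachable_def by (auto simp: hd_conv_nth)
  next
    case (Suc i)
    show ?case
    proof
      assume a: "Suc i < length h"
      then have "reachable G (h ! i)" using Suc by simp
      moreover have "step_rel G (h ! i) (h ! Suc i)" using fp a unfolding fpath_def by blast
      ultimately show "reachable G (h ! Suc i)" by (rule reach_step)
    qed
  qed
  moreover have "h \<noteq> []" using fp unfolding fpath_def by simp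
  ultimately show ?thesis by (simp add: last_conv_nth)
qed

lemma next_step:
  assumes "h \<noteq> []" "fst s \<in> dist_support G"
  shows "step_rel G (last h) (next_cfg G \<sigma> \<pi> h s)"
proof -
  obtain l x where lh: "last h = (l, x)" by (cases "last h")
  define b where "b = (case kind G l of Angel \<Rightarrow> \<sigma> h | Demon \<Rightarrow> \<pi> h
     | Probab \<Rightarrow> snd s < prb G l | Determ \<Rightarrow> guard G l True x)"
  have nx: "next_cfg G \<sigma> \<pi> h s = (succ G l b, upd G l b x (fst s))"
    unfolding next_cfg_def b_def by (simp add: lh Let_def)
  have en: "enabled G l x b"
    unfolding enabled_def b_def using guard_ex[of l x] by (cases "kind G l"; cases "guard G l True x") auto
  show ?thesis unfolding step_rel_def nx lh using en assms(2) by auto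
qed

lemma fpath_hist:
  assumes "\<And>i. fst (\<omega> i) \<in> dist_support G"
  shows "fpath G (hst \<omega> n)"
proof -
  have len: "length (hst \<omega> n) = Suc n" by (simp add: hist_map)
  have nth: "i \<le> n \<Longrightarrow> hst \<omega> n ! i = cf \<omega> i" for i
    by (simp add: hist_map nth_append del: upt_Suc)
  have st: "step_rel G (cf \<omega> i) (cf \<omega> (Suc i))" for i
    using next_step[OF hist_ne assms] by (simp add: cfg_Suc last_hist)
  show ?thesis unfolding fpath_def
    using len nth st by (auto simp: hist_ne hd_conv_nth cfg_0)
qed

lemma succ_nn:
  assumes "reachable G (l, x)" "kind G l \<noteq> Determ"
  shows "\<eta> (succ G l b) x - K' \<ge> 0"
proof -
  obtain r where r: "r \<in> dist_support G" using support_ne by blast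
  have "step_rel G (l, x) (succ G l b, x)"
    unfolding step_rel_def enabled_def using assms(2) r upd_nd[OF assms(2)] by auto
  then show ?thesis using reach_step[OF assms(1)] reach_lower by blast
qed

lemma step_real:
  assumes gr: "greedy G \<eta> \<sigma>" and fp: "fpath G h" and lh: "last h = (l, x)" and nout: "l \<noteq> out_loc G"
  shows "\<exists>E. 0 \<le> E \<and> E \<le> \<eta> l x - K' - \<epsilon> \<and>
    (\<integral>\<^sup>+s. ennreal (\<eta> (fst (next_cfg G \<sigma> \<pi> h s)) (snd (next_cfg G \<sigma> \<pi> h s)) - K') \<partial>M0) = ennreal E"
proof -
  interpret M0: prob_space M0 by (rule probM0)
  have hne: "h \<noteq> []" using fp unfolding fpath_def by simp
  have reach: "reachable G (l, x)" using fpath_reach[OF fp] lh by simp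
  have iv: "inv_holds I l x" by (rule reach_inv[OF reach])
  have c4: "pre_exp G \<eta> l x \<le> \<eta> l x - \<epsilon>" by (rule C4[OF nout iv])
  have AEn: "AE s in M0. \<eta> (fst (next_cfg G \<sigma> \<pi> h s)) (snd (next_cfg G \<sigma> \<pi> h s)) - K' \<ge> 0"
    using AE_support_M0
  proof eventually_elim
    case (elim s)
    from next_step[OF hne elim] reach_step[OF fpath_reach[OF fp]]
    have "reachable G (next_cfg G \<sigma> \<pi> h s)" by blast
    then show ?case using reach_lower by (cases "next_cfg G \<sigma> \<pi> h s") auto
  qed
  show ?thesis
  proof (cases "kind G l")
    case Angel
    have nx: "next_cfg G \<sigma> \<pi> h s = (succ G l (\<sigma> h), x)" for s
      unfolding next_cfg_def using Angel upd_nd[of l] by (simp add: lh Let_def)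
    have "\<eta> (succ G l (\<sigma> h)) x = pre_exp G \<eta> l x"
      using gr fp lh Angel unfolding greedy_def pre_exp_def by simp
    then show ?thesis using c4 succ_nn[OF reach, of "\<sigma> h"] Angel
      by (intro exI[of _ "\<eta> (succ G l (\<sigma> h)) x - K'"]) (simp add: nx prob_space.emeasure_space_1[OF probM0])
  next
    case Demon
    have nx: "next_cfg G \<sigma> \<pi> h s = (succ G l (\<pi> h), x)" for s
      unfolding next_cfg_def using Demon upd_nd[of l] by (simp add: lh Let_def)
    have "\<eta> (succ G l (\<pi> h)) x \<le> pre_exp G \<eta> l x"
      using Demon unfolding pre_exp_def by (cases "\<pi> h") auto
    then show ?thesis using c4 succ_nn[OF reach, of "\<pi> h"] Demon
      by (intro exI[of _ "\<eta> (succ G l (\<pi> h)) x - K'"]) (simp add: nx prob_space.emeasure_space_1[OF probM0])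
  next
    case Probab
    define p where "p = prb G l"
    have p01: "0 \<le> p" "p \<le> 1" using prb_bd[OF Probab] by (auto simp: p_def)
    define a where "a = \<eta> (succ G l True) x - K'"
    define b where "b = \<eta> (succ G l False) x - K'"
    have ab: "0 \<le> a" "0 \<le> b" using succ_nn[OF reach] Probab by (auto simp: a_def b_def)
    define F where "F u = (if u < p then ennreal a else ennreal b)" for u :: real
    have nx: "ennreal (\<eta> (fst (next_cfg G \<sigma> \<pi> h s)) (snd (next_cfg G \<sigma> \<pi> h s)) - K') = F (snd s)" for s
      unfolding next_cfg_def F_def a_def b_def p_def using Probab upd_nd[of l] by (simp add: lh Let_def)
    have sU: "sets U = sets (borel :: real measure)" by simp
    have Fb: "F \<in> borel_measurable (borel :: real measure)" unfolding F_def by measurable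
    then have FU: "F \<in> borel_measurable U" by (metis measurable_cong_sets sU)
    have sfU: "sigma_finite_measure U" by (rule prob_space_imp_sigma_finite[OF probU])
    have Fm: "(\<lambda>s. F (snd s)) \<in> borel_measurable M0"
      by (rule measurable_compose[OF measurable_snd FU])
    have "(\<integral>\<^sup>+s. F (snd s) \<partial>M0) = (\<integral>\<^sup>+r. \<integral>\<^sup>+u. F u \<partial>U \<partial>dist G)"
      using sigma_finite_measure.nn_integral_fst[OF sfU Fm] by simp
    also have "\<dots> = (\<integral>\<^sup>+u. F u \<partial>U)"
      by (simp add: prob_space.emeasure_space_1[OF probD])
    also have "\<dots> = (\<integral>\<^sup>+u. ennreal a * indicator {..<p} u + ennreal b * indicator {p..} u \<partial>U)"
      by (rule nn_integral_cong) (auto simp: F_def indicator_def)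
    also have "\<dots> = ennreal a * emeasure U {..<p} + ennreal b * emeasure U {p..}"
      apply (subst nn_integral_add)
        apply simp
       apply simp
      apply (subst nn_integral_cmult_indicator, simp)+
      apply (rule refl)
      done
    also have "emeasure U {..<p} = ennreal p"
    proof -
      have "{0..1} \<inter> {..<p} = {0..<p}" using p01 by auto
      then show ?thesis using p01 by (simp add: emeasure_lborel_Ico divide_ennreal_def)
    qed
    also have "emeasure U {p..} = ennreal (1 - p)"
    proof -
      have "{0..1} \<inter> {p..} = {p..1}" using p01 by auto
      then show ?thesis using p01 by (simp add: divide_ennreal_def)
    qed
    also have "ennreal a * ennreal p + ennreal b * ennreal (1 - p) = ennreal (a * p + b * (1 - p))"
      using ab p01 by (simp add: ennreal_mult ennreal_plus)
    finally have int: "(\<integral>\<^sup>+s. F (snd s) \<partial>M0) = ennreal (a * p + b * (1 - p))" .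
    have pe: "pre_exp G \<eta> l x = p * (a + K') + (1 - p) * (b + K')"
      unfolding pre_exp_def a_def b_def p_def using Probab by simp
    have "a * p + b * (1 - p) = pre_exp G \<eta> l x - K'" unfolding pe by (simp add: algebra_simps)
    moreover have "0 \<le> a * p + b * (1 - p)" using ab p01 by simp
    ultimately show ?thesis using int c4
      by (intro exI[of _ "a * p + b * (1 - p)"]) (simp add: nx)
  
  next
    case Determ
    define b0 where "b0 = guard G l True x"
    define l' where "l' = succ G l b0"
    define f where "f r = upd G l b0 x r" for r
    obtain A B c0 where fe: "\<And>r. f r = A *v x + B *v r + c0"
      using affine_upd_form[OF upd_aff[of l b0]] unfolding f_def by metis
    obtain a c where ee: "\<And>y. \<eta> l' y = a \<bullet> y + c" using eta_aff[of l'] by blast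
    define g where "g r = a \<bullet> f r + c - K'" for r
    have nx: "next_cfg G \<sigma> \<pi> h s = (l', f (fst s))" for s
      unfolding next_cfg_def l'_def f_def b0_def using Determ by (simp add: lh Let_def)
    have gx: "ennreal (\<eta> (fst (next_cfg G \<sigma> \<pi> h s)) (snd (next_cfg G \<sigma> \<pi> h s)) - K') = ennreal (g (fst s))" for s
      by (simp add: nx g_def ee)
    have idm: "(\<lambda>r. r) \<in> borel_measurable (dist G)" using measurable_ident_sets[OF setsD] by (simp add: id_def)
    have fm: "f \<in> borel_measurable (dist G)" unfolding f_def by (rule upd_meas[OF measurable_const idm]) simp
    have gm: "g \<in> borel_measurable (dist G)" unfolding g_def using fm by measurable
    have sfU: "sigma_finite_measure U" by (rule prob_space_imp_sigma_finite[OF probU])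
    have gm2: "(\<lambda>s. ennreal (g (fst s))) \<in> borel_measurable M0"
      by (rule measurable_compose[OF measurable_fst]) (use gm in measurable)
    have "(\<integral>\<^sup>+s. ennreal (g (fst s)) \<partial>M0) = (\<integral>\<^sup>+r. \<integral>\<^sup>+u. ennreal (g r) \<partial>U \<partial>dist G)"
      using sigma_finite_measure.nn_integral_fst[OF sfU gm2] by simp
    also have "\<dots> = (\<integral>\<^sup>+r. ennreal (g r) \<partial>dist G)"
      by (simp add: prob_space.emeasure_space_1[OF probU])
    finally have i1: "(\<integral>\<^sup>+s. ennreal (g (fst s)) \<partial>M0) = (\<integral>\<^sup>+r. ennreal (g r) \<partial>dist G)" .
    have ir: "integrable (dist G) (\<lambda>r. r)"
      by (rule integrable_vec) (use wf in \<open>simp add: well_formed_def\<close>)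
    interpret D: prob_space "dist G" by (rule probD)
    have fi0: "integrable (dist G) (\<lambda>r. A *v x + B *v r + c0)"
      by (intro Bochner_Integration.integrable_add D.integrable_const
            integrable_bounded_linear[OF matrix_vector_mul_bounded_linear ir])
    have "f = (\<lambda>r. A *v x + B *v r + c0)" using fe by auto
    then have fi: "integrable (dist G) f" using fi0 by simp
    have gi: "integrable (dist G) g" unfolding g_def using fi by simp
    have AEg: "AE r in dist G. 0 \<le> g r"
      using AE_support
    proof eventually_elim
      case (elim r)
      have en: "enabled G l x b0"
        unfolding enabled_def b0_def using guard_ex[of l x] Determ by (cases "guard G l True x") auto
      have "step_rel G (l, x) (l', f r)"
        unfolding step_rel_def l'_def f_def using en elim by auto
      then have "reachable G (l', f r)" by (rule reach_step[OF reach])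
      then have "\<eta> l' (f r) - K' \<ge> 0" by (rule reach_lower)
      then show ?case by (simp add: g_def ee)
    qed
    have i2: "(\<integral>\<^sup>+r. ennreal (g r) \<partial>dist G) = ennreal (integral\<^sup>L (dist G) g)"
      by (rule nn_integral_eq_integral[OF gi AEg])
    have "integral\<^sup>L (dist G) g = a \<bullet> integral\<^sup>L (dist G) f + c - K'"
      unfolding g_def using fi by (simp add: D.prob_space)
    also have "\<dots> = pre_exp G \<eta> l x - K'"
    proof -
      have "f = upd G l b0 x" by (rule ext) (simp add: f_def)
      then have "pre_exp G \<eta> l x = \<eta> l' (integral\<^sup>L (dist G) f)"
        unfolding pre_exp_def l'_def b0_def using Determ by simp
      then show ?thesis by (simp add: ee)
    qed
    finally have ig: "integral\<^sup>L (dist G) g = pre_exp G \<eta> l x - K'" .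
    have "0 \<le> integral\<^sup>L (dist G) g" by (rule integral_nonneg_AE[OF AEg])
    then show ?thesis using ig c4 i1 i2
      by (intro exI[of _ "integral\<^sup>L (dist G) g"]) (simp add: gx)
  qed
qed

end

locale greedy_setting = sched_setting +
  assumes gr: "greedy G \<eta> \<sigma>"
begin

definition W where "W c = ennreal (\<eta> (fst c) (snd c) - K')"
definition nt where "nt c = (if fst c \<noteq> out_loc G then 1 else (0::ennreal))"

lemma W_meas: "W \<in> borel_measurable C"
  unfolding W_def using eta_meas by measurable

lemma nt_meas: "nt \<in> borel_measurable C"
proof -
  have "(\<lambda>l. if l \<noteq> out_loc G then 1 else (0::ennreal)) \<in> borel_measurable (count_space UNIV)" by simp
  from measurable_compose[OF measurable_fst this] show ?thesis by (simp add: nt_def[abs_def])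
qed

lemma AE_all_support: "AE \<omega> in S.S. \<forall>i. fst (\<omega> i) \<in> dist_support G"
  unfolding AE_all_countable by (intro allI S.AE_component AE_support_M0) simp

lemma next_out: "fst (last h) = out_loc G \<Longrightarrow> next_cfg G \<sigma> \<pi> h s = last h"
  unfolding next_cfg_def by (cases "last h") (simp add: Let_def kind_out succ_out upd_out)

lemma step_ineq:
  "(\<integral>\<^sup>+\<omega>. W (cf \<omega> (Suc n)) + ennreal \<epsilon> * nt (cf \<omega> n) \<partial>S.S) \<le> (\<integral>\<^sup>+\<omega>. W (cf \<omega> n) \<partial>S.S)"
proof -
  define g where "g p = W (next_cfg G \<sigma> \<pi> (hst (fst p) n) (snd p)) + ennreal \<epsilon> * nt (cf (fst p) n)" for p
  have gm: "g \<in> borel_measurable (S.S \<Otimes>\<^sub>M M0)"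
  proof -
    have 1: "(\<lambda>p. W (next_cfg G \<sigma> \<pi> (hst (fst p) n) (snd p))) \<in> borel_measurable (S.S \<Otimes>\<^sub>M M0)"
      by (rule measurable_compose[OF phi_meas[OF cfg_meas] W_meas])
    have 2: "(\<lambda>p. nt (cf (fst p) n)) \<in> borel_measurable (S.S \<Otimes>\<^sub>M M0)"
      by (rule measurable_compose[OF measurable_compose[OF measurable_fst cfg_meas] nt_meas])
    show ?thesis unfolding g_def using 1 2 by measurable
  qed
  have dep: "g (\<omega>, s) = g (\<omega>', s)" if "\<And>j. j < n \<Longrightarrow> \<omega> j = \<omega>' j" for \<omega> \<omega>' s
  proof -
    have "hst \<omega> n = hst \<omega>' n" by (rule hist_dep[OF that])
    moreover have "cf \<omega> n = cf \<omega>' n" using calculation by (metis last_hist)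
    ultimately show ?thesis by (simp add: g_def)
  qed
  have "(\<integral>\<^sup>+\<omega>. W (cf \<omega> (Suc n)) + ennreal \<epsilon> * nt (cf \<omega> n) \<partial>S.S) = (\<integral>\<^sup>+\<omega>. g (\<omega>, \<omega> n) \<partial>S.S)"
    by (simp add: g_def cfg_Suc)
  also have "\<dots> = (\<integral>\<^sup>+\<omega>. \<integral>\<^sup>+s. g (\<omega>, s) \<partial>M0 \<partial>S.S)"
    by (rule decomp[OF gm dep])
  also have "\<dots> \<le> (\<integral>\<^sup>+\<omega>. W (cf \<omega> n) \<partial>S.S)"
  proof (rule nn_integral_mono_AE)
    show "AE \<omega> in S.S. (\<integral>\<^sup>+s. g (\<omega>, s) \<partial>M0) \<le> W (cf \<omega> n)"
      using AE_all_support AE_space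
    proof eventually_elim
      case (elim \<omega>)
      have fp: "fpath G (hst \<omega> n)" by (rule fpath_hist) (use elim(1) in auto)
      obtain l x where lx: "cf \<omega> n = (l, x)" by (cases "cf \<omega> n")
      have lh: "last (hst \<omega> n) = (l, x)" using lx by (simp add: last_hist)
      show ?case
      proof (cases "l = out_loc G")
        case True
        have "g (\<omega>, s) = W (l, x)" for s
          using next_out[of "hst \<omega> n" s] lh lx True by (simp add: g_def nt_def)
        then show ?thesis by (simp add: prob_space.emeasure_space_1[OF probM0] lx)
      next
        case False
        obtain E where E: "0 \<le> E" "E \<le> \<eta> l x - K' - \<epsilon>"
          "(\<integral>\<^sup>+s. ennreal (\<eta> (fst (next_cfg G \<sigma> \<pi> (hst \<omega> n) s)) (snd (next_cfg G \<sigma> \<pi> (hst \<omega> n) s)) - K') \<partial>M0) = ennreal E"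
          using step_real[OF gr fp lh False] by blast
        have Wn: "(\<lambda>s. W (next_cfg G \<sigma> \<pi> (hst \<omega> n) s)) \<in> borel_measurable M0"
        proof -
          have "(\<lambda>s. (\<omega>, s)) \<in> M0 \<rightarrow>\<^sub>M S.S \<Otimes>\<^sub>M M0"
            using elim(2) by (intro measurable_Pair measurable_const measurable_ident_sets) auto
          from measurable_compose[OF this measurable_compose[OF phi_meas[OF cfg_meas] W_meas]] show ?thesis by simp
        qed
        have "(\<integral>\<^sup>+s. g (\<omega>, s) \<partial>M0) = (\<integral>\<^sup>+s. W (next_cfg G \<sigma> \<pi> (hst \<omega> n) s) + ennreal \<epsilon> \<partial>M0)"
          using False by (simp add: g_def nt_def lx)
        also have "\<dots> = (\<integral>\<^sup>+s. W (next_cfg G \<sigma> \<pi> (hst \<omega> n) s) \<partial>M0) + ennreal \<epsilon>"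
          using Wn by (subst nn_integral_add) (auto simp: prob_space.emeasure_space_1[OF probM0])
        also have "\<dots> = ennreal E + ennreal \<epsilon>" using E(3) by (simp add: W_def)
        also have "\<dots> = ennreal (E + \<epsilon>)" using E(1) eps_ge by (simp add: ennreal_plus)
        also have "\<dots> \<le> W (cf \<omega> n)" using E(2) by (simp add: W_def lx ennreal_leI)
        finally show ?thesis .
      qed
    qed
  qed
  finally show ?thesis .
qed

lemma Wcf_meas: "(\<lambda>\<omega>. W (cf \<omega> n)) \<in> borel_measurable S.S"
  by (rule measurable_compose[OF cfg_meas W_meas])
lemma ntcf_meas: "(\<lambda>\<omega>. nt (cf \<omega> n)) \<in> borel_measurable S.S"
  by (rule measurable_compose[OF cfg_meas nt_meas])

lemma sum_bound:
  "ennreal \<epsilon> * (\<Sum>k<n. \<integral>\<^sup>+\<omega>. nt (cf \<omega> k) \<partial>S.S) + (\<integral>\<^sup>+\<omega>. W (cf \<omega> n) \<partial>S.S) \<le> (\<integral>\<^sup>+\<omega>. W (cf \<omega> 0) \<partial>S.S)"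
proof (induction n)
  case 0
  then show ?case by simp
next
  case (Suc n)
  have "(\<integral>\<^sup>+\<omega>. W (cf \<omega> (Suc n)) + ennreal \<epsilon> * nt (cf \<omega> n) \<partial>S.S)
     = (\<integral>\<^sup>+\<omega>. W (cf \<omega> (Suc n)) \<partial>S.S) + ennreal \<epsilon> * (\<integral>\<^sup>+\<omega>. nt (cf \<omega> n) \<partial>S.S)"
    using Wcf_meas ntcf_meas by (simp add: nn_integral_add nn_integral_cmult)
  then have st: "(\<integral>\<^sup>+\<omega>. W (cf \<omega> (Suc n)) \<partial>S.S) + ennreal \<epsilon> * (\<integral>\<^sup>+\<omega>. nt (cf \<omega> n) \<partial>S.S) \<le> (\<integral>\<^sup>+\<omega>. W (cf \<omega> n) \<partial>S.S)"
    using step_ineq[of n] by simp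
  have "ennreal \<epsilon> * (\<Sum>k<Suc n. \<integral>\<^sup>+\<omega>. nt (cf \<omega> k) \<partial>S.S) + (\<integral>\<^sup>+\<omega>. W (cf \<omega> (Suc n)) \<partial>S.S)
     = ennreal \<epsilon> * (\<Sum>k<n. \<integral>\<^sup>+\<omega>. nt (cf \<omega> k) \<partial>S.S) + ((\<integral>\<^sup>+\<omega>. W (cf \<omega> (Suc n)) \<partial>S.S) + ennreal \<epsilon> * (\<integral>\<^sup>+\<omega>. nt (cf \<omega> n) \<partial>S.S))"
    by (simp add: distrib_left ac_simps)
  also have "\<dots> \<le> ennreal \<epsilon> * (\<Sum>k<n. \<integral>\<^sup>+\<omega>. nt (cf \<omega> k) \<partial>S.S) + (\<integral>\<^sup>+\<omega>. W (cf \<omega> n) \<partial>S.S)"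
    using st by (rule add_left_mono)
  also have "\<dots> \<le> (\<integral>\<^sup>+\<omega>. W (cf \<omega> 0) \<partial>S.S)" by (rule Suc)
  finally show ?case .
qed

lemma a0: "(\<integral>\<^sup>+\<omega>. W (cf \<omega> 0) \<partial>S.S) = ennreal (\<eta> (init_loc G) (init_val G) - K')"
  by (simp add: cfg_0 W_def prob_space.emeasure_space_1[OF probS])

lemma out_stays: "fst (cf \<omega> k) = out_loc G \<Longrightarrow> fst (cf \<omega> (k + j)) = out_loc G"
proof (induction j)
  case 0 then show ?case by simp
next
  case (Suc j)
  then have "fst (last (hst \<omega> (k + j))) = out_loc G" by (simp add: last_hist)
  then have "cf \<omega> (Suc (k + j)) = cf \<omega> (k + j)" by (simp add: cfg_Suc next_out last_hist)
  then show ?case using Suc by simp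
qed

lemma term_time_eq: "term_time G \<sigma> \<pi> \<omega> = (\<Sum>k. nt (cf \<omega> k))"
proof (cases "\<exists>n. fst (cf \<omega> n) = out_loc G")
  case True
  define N where "N = (LEAST n. fst (cf \<omega> n) = out_loc G)"
  have NN: "fst (cf \<omega> N) = out_loc G" unfolding N_def using True by (rule LeastI_ex)
  have lt: "k < N \<Longrightarrow> fst (cf \<omega> k) \<noteq> out_loc G" for k unfolding N_def by (rule not_less_Least)
  have ge: "k \<ge> N \<Longrightarrow> fst (cf \<omega> k) = out_loc G" for k
    using out_stays[OF NN, of "k - N"] by simp
  have "(\<Sum>k. nt (cf \<omega> k)) = (\<Sum>k<N. nt (cf \<omega> k))"
    by (rule suminf_finite) (auto simp: nt_def ge not_less)
  also have "\<dots> = (\<Sum>k<N. 1)" by (rule sum.cong) (auto simp: nt_def lt)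
  also have "\<dots> = of_nat N" by simp
  finally show ?thesis using True by (simp add: term_time_def N_def)
next
  case False
  then have "nt (cf \<omega> k) = 1" for k by (simp add: nt_def)
  moreover have "(\<lambda>k. (1::ennreal)) sums \<infinity>"
    by (simp add: sums_def of_nat_tendsto_top_ennreal)
  ultimately have "(\<Sum>k. nt (cf \<omega> k)) = \<infinity>" by (simp add: sums_unique[symmetric])
  then show ?thesis using False by (simp add: term_time_def)
qed

lemma expT_eq: "exp_T G \<sigma> \<pi> = (\<Sum>k. \<integral>\<^sup>+\<omega>. nt (cf \<omega> k) \<partial>S.S)"
  unfolding exp_T_def noise_eq term_time_eq by (rule nn_integral_suminf[OF ntcf_meas])

lemma expT_bound: "exp_T G \<sigma> \<pi> \<le> ennreal ((\<eta> (init_loc G) (init_val G) - K') / \<epsilon>)"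
proof -
  define c where "c = \<eta> (init_loc G) (init_val G) - K'"
  have "(\<Sum>k. ennreal \<epsilon> * (\<integral>\<^sup>+\<omega>. nt (cf \<omega> k) \<partial>S.S)) \<le> ennreal c"
  proof (rule suminf_le_const[OF summableI])
    fix n
    have "(\<Sum>k<n. ennreal \<epsilon> * (\<integral>\<^sup>+\<omega>. nt (cf \<omega> k) \<partial>S.S)) = ennreal \<epsilon> * (\<Sum>k<n. \<integral>\<^sup>+\<omega>. nt (cf \<omega> k) \<partial>S.S)"
      by (simp add: sum_distrib_left)
    also have "\<dots> \<le> ennreal \<epsilon> * (\<Sum>k<n. \<integral>\<^sup>+\<omega>. nt (cf \<omega> k) \<partial>S.S) + (\<integral>\<^sup>+\<omega>. W (cf \<omega> n) \<partial>S.S)" by simp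
    also have "\<dots> \<le> ennreal c" using sum_bound[of n] by (simp add: a0 c_def)
    finally show "(\<Sum>k<n. ennreal \<epsilon> * (\<integral>\<^sup>+\<omega>. nt (cf \<omega> k) \<partial>S.S)) \<le> ennreal c" .
  qed
  moreover have "ennreal \<epsilon> * ennreal (c / \<epsilon>) = ennreal c"
    using eps_ge by (simp add: ennreal_mult'[symmetric])
  ultimately have "ennreal \<epsilon> * exp_T G \<sigma> \<pi> \<le> ennreal \<epsilon> * ennreal (c / \<epsilon>)"
    by (simp add: expT_eq)
  then show ?thesis using eps_ge ennreal_mult_le_mult_iff[of "ennreal \<epsilon>"] by (simp add: c_def)
qed

lemma prob_term_1: "prob_term G \<sigma> \<pi> = 1"
proof -
  have tm: "term_time G \<sigma> \<pi> \<in> borel_measurable S.S"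
    unfolding term_time_eq[abs_def] using ntcf_meas by measurable
  have "exp_T G \<sigma> \<pi> \<noteq> top" by (rule neq_top_trans[OF ennreal_neq_top expT_bound])
  then have "exp_T G \<sigma> \<pi> \<noteq> \<infinity>" by simp
  then have "AE \<omega> in S.S. term_time G \<sigma> \<pi> \<omega> \<noteq> \<infinity>"
    unfolding exp_T_def noise_eq by (rule nn_integral_PInf_AE[OF tm])
  then have ae: "AE \<omega> in S.S. \<omega> \<in> {\<omega> \<in> space S.S. \<exists>n. fst (cf \<omega> n) = out_loc G}"
    using AE_space by eventually_elim (auto simp: term_time_def split: if_splits)
  have "Measurable.pred S.S (\<lambda>\<omega>. fst (cf \<omega> n) = out_loc G)" for n
  proof -
    have "(\<lambda>l. l = out_loc G) \<in> count_space UNIV \<rightarrow>\<^sub>M count_space UNIV" by simp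
    from measurable_compose[OF measurable_compose[OF cfg_meas measurable_fst] this] show ?thesis .
  qed
  then have "{\<omega> \<in> space S.S. \<exists>n. fst (cf \<omega> n) = out_loc G} \<in> sets S.S" by measurable
  from prob_space.emeasure_eq_1_AE[OF probS this ae] show ?thesis
    unfolding prob_term_def noise_eq .
qed

end

context setting begin

definition \<sigma>0 :: "('l, 'n) sched" where
  "\<sigma>0 h = (\<eta> (succ G (fst (last h)) True) (snd (last h)) \<le> \<eta> (succ G (fst (last h)) False) (snd (last h)))"

lemma \<sigma>0_greedy: "greedy G \<eta> \<sigma>0"
  unfolding greedy_def \<sigma>0_def by (auto simp: min_def)

lemma \<sigma>0_meas: "sched_measurable \<sigma>0"
  unfolding sched_measurable_def
proof
  fix n
  define F where "F c = (\<eta> (succ G (fst c) True) (snd c) \<le> \<eta> (succ G (fst c) False) (snd c))" for c :: "'l \<times> (real ^ 'n)"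
  have Fm: "F \<in> C \<rightarrow>\<^sub>M count_space UNIV"
  proof -
    have "(\<lambda>c. (\<lambda>l c. \<eta> (succ G l True) (snd c) \<le> \<eta> (succ G l False) (snd c)) (fst c) c) \<in> C \<rightarrow>\<^sub>M count_space UNIV"
    proof (rule measurable_compose_countable'[OF _ measurable_fst])
      fix l
      obtain a1 c1 where e1: "\<forall>x. \<eta> (succ G l True) x = a1 \<bullet> x + c1" using eta_aff by blast
      obtain a2 c2 where e2: "\<forall>x. \<eta> (succ G l False) x = a2 \<bullet> x + c2" using eta_aff by blast
      show "Measurable.pred C (\<lambda>c. \<eta> (succ G l True) (snd c) \<le> \<eta> (succ G l False) (snd c))"
        unfolding e1[rule_format] e2[rule_format] by measurable
    qed simp
    then show ?thesis unfolding F_def[abs_def] .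
  qed
  have "(\<lambda>h. F (h n)) \<in> PiM UNIV (\<lambda>_::nat. C) \<rightarrow>\<^sub>M count_space UNIV"
    by (rule measurable_compose[OF measurable_component_singleton[of n UNIV "\<lambda>_. C"] Fm]) simp
  moreover have "\<sigma>0 (map h [0..<Suc n]) = F (h n)" for h :: "nat \<Rightarrow> 'l \<times> (real ^ 'n)"
    by (simp add: \<sigma>0_def F_def del: upt_Suc add: last_map)
  ultimately show "(\<lambda>h. \<sigma>0 (map h [0..<Suc n])) \<in> PiM UNIV (\<lambda>_::nat. C) \<rightarrow>\<^sub>M count_space UNIV" by simp
qed

lemma gs: "sched_measurable \<sigma> \<Longrightarrow> sched_measurable \<pi> \<Longrightarrow> greedy G \<eta> \<sigma> \<Longrightarrow> greedy_setting G I \<eta> \<epsilon> K K' \<sigma> \<pi>"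
  by (simp add: greedy_setting_def greedy_setting_axioms_def sched_setting_def sched_setting_axioms_def setting_axioms)

end

theorem theorem1:
  fixes G :: "('l::finite, 'n::finite, 'r::finite) sgs"
    and I :: "'l \<Rightarrow> (real ^ 'n \<Rightarrow> bool) set"
    and \<eta> :: "'l \<Rightarrow> real ^ 'n \<Rightarrow> real"
    and \<epsilon> K K' :: real
  assumes "well_formed G"
    and "lin_invariant G I"
    and "is_LRSM G I \<eta> \<epsilon> K K'"
  shows "(\<exists>\<sigma>. sched_measurable \<sigma> \<and> greedy G \<eta> \<sigma>) \<and>
         (\<forall>\<sigma>. sched_measurable \<sigma> \<and> greedy G \<eta> \<sigma> \<longrightarrow>
              (\<forall>\<pi>. sched_measurable \<pi> \<longrightarrow> prob_term G \<sigma> \<pi> = 1) \<and>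
              (\<Squnion>\<pi> \<in> {\<pi>. sched_measurable \<pi>}. exp_T G \<sigma> \<pi>)
                 \<le> ennreal ((\<eta> (init_loc G) (init_val G) - K') / \<epsilon>)) \<and>
         ET G \<le> ennreal ((\<eta> (init_loc G) (init_val G) - K') / \<epsilon>) \<and>
         ET G < \<infinity>"
proof -
  interpret setting G I \<eta> \<epsilon> K K' using assms by unfold_locales
  have main: "(\<forall>\<pi>. sched_measurable \<pi> \<longrightarrow> prob_term G \<sigma> \<pi> = 1) \<and>
      (\<Squnion>\<pi> \<in> {\<pi>. sched_measurable \<pi>}. exp_T G \<sigma> \<pi>) \<le> ennreal ((\<eta> (init_loc G) (init_val G) - K') / \<epsilon>)"
    if "sched_measurable \<sigma>" "greedy G \<eta> \<sigma>" for \<sigma>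
    using greedy_setting.prob_term_1[OF gs[OF that(1) _ that(2)]]
      greedy_setting.expT_bound[OF gs[OF that(1) _ that(2)]]
    by (auto intro!: SUP_least)
  have et: "ET G \<le> ennreal ((\<eta> (init_loc G) (init_val G) - K') / \<epsilon>)"
  proof -
    have "ET G \<le> (\<Squnion>\<pi> \<in> {\<pi>. sched_measurable \<pi>}. exp_T G \<sigma>0 \<pi>)"
      unfolding ET_def by (rule INF_lower) (simp add: \<sigma>0_meas)
    also have "\<dots> \<le> ennreal ((\<eta> (init_loc G) (init_val G) - K') / \<epsilon>)"
      using main[OF \<sigma>0_meas \<sigma>0_greedy] by blast
    finally show ?thesis .
  qed
  moreover have "ET G < \<infinity>"
    using et by (metis ennreal_less_top infinity_ennreal_def order_le_less_trans)
  ultimately show ?thesis using main \<sigma>0_meas \<sigma>0_greedy by blast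
qed

end
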